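(* Let $N_1,N_2,N_3\ge 0$ be integers. The set of support hyperplanes of the convex set $Q(N_1,N_2,N_3)$ coincides with the set of hyperplanes $\{f: L_\Phi(f)=0\}$, where $\Phi\in P(N_1,N_2,N_3)$ and the associated matrix $A(N_1,N_2,N_3)$ satisfies $\det A(N_1,N_2,N_3)=0$.
   Context: For integers $N_1,N_2,N_3\ge0$, $\sigma(N_1,N_2,N_3)$ is the set of trigonometric polynomials $f(\alpha,\beta,\gamma)=\sum_{|k|\le N_1}\sum_{|\ell|\le N_2}\sum_{|m|\le N_3} q(k,\ell,m)e^{i(k\alpha+\ell\beta+m\gamma)}$ (complex coefficients) with $f(\alpha,\beta,\gamma)\ge0$ for all real $\alpha,\beta,\gamma$. $Q(N_1,N_2,N_3)$ is the set of $f\in\sigma(N_1,N_2,N_3)$ that can be written $f=\sum_{j=1}^r|F_j|^2$ with $F_j(\alpha,\beta,\gamma)=\sum_{0\le k\le N_1}\sum_{0\le \ell\le N_2}\sum_{0\le m\le N_3}q_j(k,\ell,m)e^{i(k\alpha+\ell\beta+m\gamma)}$. These are convex subsets of the real vector space of real-valued trigonometric polynomials with frequencies $(k,\ell,m)$, $|k|\le N_1,|\ell|\le N_2,|m|\le N_3$. Let $S=\{(k,\ell,m)\in\mathbb Z^3:0\le k\le N_1,0\le\ell\le N_2,0\le m\le N_3\}$ and $\Delta=S-S=\{(k,\ell,m):|k|\le N_1,|\ell|\le N_2,|m|\le N_3\}$. $P(N_1,N_2,N_3)$ is the class of functions $\Phi:\Delta\to\mathbb C$ that are Hermitian positive, i.e.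 $\sum_{i,j}\xi_i\bar\xi_j\Phi(x_i-x_j)\ge0$ for all $x_1,\dots,x_n\in S$ and $\xi_1,\dots,\xi_n\in\mathbb C$. For such $\Phi$, $L_\Phi(f)=\sum_{|k|\le N_1}\sum_{|\ell|\le N_2}\sum_{|m|\le N_3}q(k,\ell,m)\Phi(k,\ell,m)$, and $A(N_1,N_2,N_3)$ is the matrix with rows and columns indexed by $S$ (ordered lexicographically) whose entry in row $x$, column $y$ is $\Phi(y-x)$. A hyperplane $\{f:L(f)=c\}$ ($L$ a nonzero real linear functional) supports a set $U$ if $L(f)\ge c$ for all $f\in U$ or $L(f)\le c$ for all $f\in U$, and $L(f_0)=c$ for some $f_0\in U$. *)

theory Defs
  imports Complex_Main "HOL-Library.Complex_Order" "Jordan_Normal_Form.Determinant"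
begin

type_synonym freq = "int \<times> int \<times> int"

text \<open>Frequency box Delta = S - S and the index set S.\<close>
definition Delta :: "nat \<Rightarrow> nat \<Rightarrow> nat \<Rightarrow> freq set" where
  "Delta N1 N2 N3 = {(k,l,m). \<bar>k\<bar> \<le> int N1 \<and> \<bar>l\<bar> \<le> int N2 \<and> \<bar>m\<bar> \<le> int N3}"

definition Sset :: "nat \<Rightarrow> nat \<Rightarrow> nat \<Rightarrow> freq set" where
  "Sset N1 N2 N3 = {(k,l,m). 0 \<le> k \<and> k \<le> int N1 \<and> 0 \<le> l \<and> l \<le> int N2 \<and> 0 \<le> m \<and> m \<le> int N3}"

definition fdiff :: "freq \<Rightarrow> freq \<Rightarrow> freq" where
  "fdiff x y = (fst x - fst y, fst (snd x) - fst (snd y), snd (snd x) - snd (snd y))"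

definition trig_eval :: "freq set \<Rightarrow> (freq \<Rightarrow> complex) \<Rightarrow> real \<times> real \<times> real \<Rightarrow> complex" where
  "trig_eval D q \<theta> = (\<Sum>(k,l,m)\<in>D. q (k,l,m) *
      exp (\<i> * complex_of_real (of_int k * fst \<theta> + of_int l * fst (snd \<theta>) + of_int m * snd (snd \<theta>))))"

text \<open>The ambient real vector space: real-valued trigonometric polynomials with frequencies in Delta
  (represented by their coefficient functions, vanishing outside Delta).\<close>
definition Vsp :: "nat \<Rightarrow> nat \<Rightarrow> nat \<Rightarrow> (freq \<Rightarrow> complex) set" where
  "Vsp N1 N2 N3 = {q. (\<forall>k. k \<notin> Delta N1 N2 N3 \<longrightarrow> q k = 0) \<and>
                      (\<forall>\<theta>. trig_eval (Delta N1 N2 N3) q \<theta> \<in> \<real>)}"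

definition Qset :: "nat \<Rightarrow> nat \<Rightarrow> nat \<Rightarrow> (freq \<Rightarrow> complex) set" where
  "Qset N1 N2 N3 = {q \<in> Vsp N1 N2 N3. \<exists>(r::nat) (F :: nat \<Rightarrow> freq \<Rightarrow> complex).
      (\<forall>j<r. \<forall>k. k \<notin> Sset N1 N2 N3 \<longrightarrow> F j k = 0) \<and>
      (\<forall>\<theta>. trig_eval (Delta N1 N2 N3) q \<theta> =
            (\<Sum>j<r. complex_of_real ((cmod (trig_eval (Sset N1 N2 N3) (F j) \<theta>))\<^sup>2)))}"

definition herm_pos :: "nat \<Rightarrow> nat \<Rightarrow> nat \<Rightarrow> (freq \<Rightarrow> complex) \<Rightarrow> bool" where
  "herm_pos N1 N2 N3 \<Phi> = (\<forall>(n::nat) (x :: nat \<Rightarrow> freq) (\<xi> :: nat \<Rightarrow> complex).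
      (\<forall>i<n. x i \<in> Sset N1 N2 N3) \<longrightarrow>
      0 \<le> (\<Sum>i<n. \<Sum>j<n. \<xi> i * cnj (\<xi> j) * \<Phi> (fdiff (x i) (x j))))"

definition LPhi :: "nat \<Rightarrow> nat \<Rightarrow> nat \<Rightarrow> (freq \<Rightarrow> complex) \<Rightarrow> (freq \<Rightarrow> complex) \<Rightarrow> complex" where
  "LPhi N1 N2 N3 \<Phi> q = (\<Sum>k\<in>Delta N1 N2 N3. q k * \<Phi> k)"

text \<open>Lexicographic enumeration of S: index i < (N1+1)(N2+1)(N3+1).\<close>
definition sidx :: "nat \<Rightarrow> nat \<Rightarrow> nat \<Rightarrow> freq" where
  "sidx N2 N3 i = (int (i div ((N2+1)*(N3+1))), int ((i div (N3+1)) mod (N2+1)), int (i mod (N3+1)))"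

definition Amat :: "nat \<Rightarrow> nat \<Rightarrow> nat \<Rightarrow> (freq \<Rightarrow> complex) \<Rightarrow> complex mat" where
  "Amat N1 N2 N3 \<Phi> = mat ((N1+1)*(N2+1)*(N3+1)) ((N1+1)*(N2+1)*(N3+1))
      (\<lambda>(i,j). \<Phi> (fdiff (sidx N2 N3 j) (sidx N2 N3 i)))"

definition real_lin_functional :: "(freq \<Rightarrow> complex) set \<Rightarrow> ((freq \<Rightarrow> complex) \<Rightarrow> real) \<Rightarrow> bool" where
  "real_lin_functional V L = ((\<forall>p\<in>V. \<forall>q\<in>V. \<forall>a b :: real.
        L (\<lambda>k. complex_of_real a * p k + complex_of_real b * q k) = a * L p + b * L q)
      \<and> (\<exists>q\<in>V. L q \<noteq> 0))"

definition supports :: "(freq \<Rightarrow> complex) set \<Rightarrow> ((freq \<Rightarrow> complex) \<Rightarrow> real) \<Rightarrow> real \<Rightarrow> bool" where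
  "supports U L c = (((\<forall>f\<in>U. c \<le> L f) \<or> (\<forall>f\<in>U. L f \<le> c)) \<and> (\<exists>f0\<in>U. L f0 = c))"

end

theory Submission
  imports Defs
begin


lemma cis_ne_1:
  fixes n :: int and M :: nat
  assumes "n \<noteq> 0" "\<bar>n\<bar> < int M"
  shows "cis (2 * pi * of_int n / real M) \<noteq> 1"
proof
  assume c1: "cis (2 * pi * of_int n / real M) = 1"
  have "cos (2 * pi * of_int n / real M) = 1"
    using arg_cong[OF c1, of Re] by simp
  then obtain j :: int where j: "2 * pi * of_int n / real M = of_int j * 2 * pi"
    using cos_one_2pi_int by blast
  have M0: "real M > 0" using assms by simp
  from j have "of_int n = of_int j * real M" using M0 pi_gt_zero
    by (simp add: field_simps)
  then have nj: "n = j * int M" by (metis of_int_eq_iff of_int_mult of_int_of_nat_eq)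
  with assms have "j \<noteq> 0" by auto
  then have "\<bar>j * int M\<bar> \<ge> int M" by (simp add: abs_mult mult_le_cancel_right1 zero_less_abs_iff[symmetric] del: zero_less_abs_iff)
  with nj assms show False by simp
qed

lemma roots_sum:
  fixes n :: int and M :: nat
  assumes "n \<noteq> 0" "\<bar>n\<bar> < int M"
  shows "(\<Sum>a<M. cis (2 * pi * real a * of_int n / real M)) = 0"
proof -
  define w where "w = cis (2 * pi * of_int n / real M)"
  have w1: "w \<noteq> 1" using cis_ne_1[OF assms] w_def by simp
  have "\<And>a. cis (2 * pi * real a * of_int n / real M) = w ^ a"
    unfolding w_def DeMoivre by (simp add: mult_ac)
  then have "(\<Sum>a<M. cis (2 * pi * real a * of_int n / real M)) = (\<Sum>a<M. w ^ a)" by simp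
  also have "\<dots> = (w ^ M - 1) / (w - 1)" using geometric_sum[OF w1] .
  also have "w ^ M = 1"
  proof -
    have M0: "real M \<noteq> 0" using assms by simp
    have "w ^ M = cis (real M * (2 * pi * of_int n / real M))" unfolding w_def DeMoivre ..
    also have "real M * (2 * pi * of_int n / real M) = 2 * pi * of_int n" using M0 by simp
    also have "cis (2 * pi * of_int n) = 1" by (rule cis_multiple_2pi) simp
    finally show ?thesis .
  qed
  finally show ?thesis by simp
qed

lemma coef_extract:
  fixes \<phi> :: "'k \<Rightarrow> int" and M :: nat
  assumes fin: "finite D" and inj: "inj_on \<phi> D" and bd: "\<And>k k'. k \<in> D \<Longrightarrow> k' \<in> D \<Longrightarrow> \<bar>\<phi> k - \<phi> k'\<bar> < int M"
    and k0: "k0 \<in> D"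
  shows "(\<Sum>a<M. (\<Sum>k\<in>D. c k * cis (of_int (\<phi> k) * (2 * pi * real a / real M))) * cis (- (of_int (\<phi> k0) * (2 * pi * real a / real M))))
        = of_nat M * c k0"
proof -
  have "(\<Sum>a<M. (\<Sum>k\<in>D. c k * cis (of_int (\<phi> k) * (2 * pi * real a / real M))) * cis (- (of_int (\<phi> k0) * (2 * pi * real a / real M))))
      = (\<Sum>a<M. \<Sum>k\<in>D. c k * cis (2 * pi * real a * of_int (\<phi> k - \<phi> k0) / real M))"
  proof (rule sum.cong[OF refl])
    fix a assume "a \<in> {..<M}"
    have h: "\<And>k. c k * cis (of_int (\<phi> k) * (2 * pi * real a / real M)) * cis (- (of_int (\<phi> k0) * (2 * pi * real a / real M)))
       = c k * cis (2 * pi * real a * of_int (\<phi> k - \<phi> k0) / real M)"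
    proof -
      fix k
      have "c k * cis (of_int (\<phi> k) * (2 * pi * real a / real M)) * cis (- (of_int (\<phi> k0) * (2 * pi * real a / real M)))
        = c k * cis (of_int (\<phi> k) * (2 * pi * real a / real M) + - (of_int (\<phi> k0) * (2 * pi * real a / real M)))"
        by (simp add: mult.assoc cis_mult)
      also have "of_int (\<phi> k) * (2 * pi * real a / real M) + - (of_int (\<phi> k0) * (2 * pi * real a / real M))
         = 2 * pi * real a * of_int (\<phi> k - \<phi> k0) / real M" by (simp add: algebra_simps diff_divide_distrib)
      finally show "?thesis k" .
    qed
    then show "(\<Sum>k\<in>D. c k * cis (of_int (\<phi> k) * (2 * pi * real a / real M))) * cis (- (of_int (\<phi> k0) * (2 * pi * real a / real M)))
      = (\<Sum>k\<in>D. c k * cis (2 * pi * real a * of_int (\<phi> k - \<phi> k0) / real M))"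
      by (simp only: sum_distrib_right h)
  qed
  also have "\<dots> = (\<Sum>k\<in>D. c k * (\<Sum>a<M. cis (2 * pi * real a * of_int (\<phi> k - \<phi> k0) / real M)))"
    by (subst sum.swap) (simp add: sum_distrib_left)
  also have "\<dots> = (\<Sum>k\<in>D. if k = k0 then c k * of_nat M else 0)"
  proof (rule sum.cong[OF refl])
    fix k assume k: "k \<in> D"
    show "c k * (\<Sum>a<M. cis (2 * pi * real a * of_int (\<phi> k - \<phi> k0) / real M)) = (if k = k0 then c k * of_nat M else 0)"
    proof (cases "k = k0")
      case True then show ?thesis by simp
    next
      case False
      then have "\<phi> k - \<phi> k0 \<noteq> 0" using inj k k0 by (auto simp: inj_on_def)
      then show ?thesis using roots_sum[of "\<phi> k - \<phi> k0" M] bd[OF k k0] False by simp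
    qed
  qed
  also have "\<dots> = of_nat M * c k0" using fin k0 by (simp add: sum.delta mult.commute)
  finally show ?thesis .
qed

lemma coef_unique:
  fixes \<phi> :: "'k \<Rightarrow> int" and M :: nat
  assumes fin: "finite D" and inj: "inj_on \<phi> D" and bd: "\<And>k k'. k \<in> D \<Longrightarrow> k' \<in> D \<Longrightarrow> \<bar>\<phi> k - \<phi> k'\<bar> < int M"
    and eq: "\<And>t. (\<Sum>k\<in>D. c k * cis (of_int (\<phi> k) * t)) = (\<Sum>k\<in>D. d k * cis (of_int (\<phi> k) * t))"
    and k0: "k0 \<in> D"
  shows "c k0 = d k0"
proof -
  have M0: "M > 0" using bd[OF k0 k0] by simp
  have "of_nat M * c k0 = of_nat M * d k0"
    using coef_extract[OF fin inj bd k0, of c] coef_extract[OF fin inj bd k0, of d]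
    unfolding eq by simp
  then show ?thesis using M0 by simp
qed



definition ph :: "freq \<Rightarrow> real \<times> real \<times> real \<Rightarrow> real" where
  "ph k \<theta> = of_int (fst k) * fst \<theta> + of_int (fst (snd k)) * fst (snd \<theta>) + of_int (snd (snd k)) * snd (snd \<theta>)"

lemma trig_eval_cis: "trig_eval D q \<theta> = (\<Sum>k\<in>D. q k * cis (ph k \<theta>))"
  unfolding trig_eval_def
  by (rule sum.cong[OF refl]) (auto simp: ph_def cis_conv_exp split: prod.splits)

lemma Delta_eq: "Delta N1 N2 N3 = {-int N1..int N1} \<times> {-int N2..int N2} \<times> {-int N3..int N3}"
  unfolding Delta_def by auto

lemma finite_Delta[simp]: "finite (Delta N1 N2 N3)"
  unfolding Delta_eq by simp

lemma Sset_eq: "Sset N1 N2 N3 = {0..int N1} \<times> {0..int N2} \<times> {0..int N3}"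
  unfolding Sset_def by auto

lemma finite_Sset[simp]: "finite (Sset N1 N2 N3)"
  unfolding Sset_eq by simp

lemma digit_zero:
  fixes x y P :: int
  assumes "\<bar>x\<bar> < P" "x + P * y = 0"
  shows "x = 0 \<and> y = 0"
proof (cases "y = 0")
  case True with assms show ?thesis by simp
next
  case False
  have P0: "P > 0" using assms(1) by simp
  have "\<bar>P * y\<bar> \<ge> P" using False P0 by (simp add: abs_mult mult_le_cancel_left1)
  moreover have "\<bar>P * y\<bar> = \<bar>x\<bar>" using assms(2) by (metis abs_minus_cancel add.commute add_eq_0_iff)
  ultimately show ?thesis using assms(1) by simp
qed

definition kron :: "nat \<Rightarrow> nat \<Rightarrow> freq \<Rightarrow> int" where
  "kron N1 N2 k = fst k + (2 * int N1 + 1) * fst (snd k) + (2 * int N1 + 1) * (2 * int N2 + 1) * snd (snd k)"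

lemma kron_inj: "inj_on (kron N1 N2) (Delta N1 N2 N3)"
proof (rule inj_onI)
  fix a b assume a: "a \<in> Delta N1 N2 N3" and b: "b \<in> Delta N1 N2 N3" and e: "kron N1 N2 a = kron N1 N2 b"
  obtain a1 a2 a3 where aa: "a = (a1,a2,a3)" by (cases a) auto
  obtain b1 b2 b3 where bb: "b = (b1,b2,b3)" by (cases b) auto
  let ?P = "2 * int N1 + 1" and ?Q = "2 * int N2 + 1"
  have h1: "(a1 - b1) + ?P * ((a2 - b2) + ?Q * (a3 - b3)) = 0"
    using e unfolding aa bb kron_def by (simp add: algebra_simps)
  have "\<bar>a1 - b1\<bar> < ?P" using a b unfolding aa bb Delta_def by auto
  from digit_zero[OF this h1] have r1: "a1 = b1" and h2: "(a2 - b2) + ?Q * (a3 - b3) = 0" by auto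
  have "\<bar>a2 - b2\<bar> < ?Q" using a b unfolding aa bb Delta_def by auto
  from digit_zero[OF this h2] have "a2 = b2" "a3 = b3" by auto
  with r1 show "a = b" using aa bb by simp
qed

lemma kron_bound:
  assumes "a \<in> Delta N1 N2 N3"
  shows "\<bar>kron N1 N2 a\<bar> \<le> int N1 + (2 * int N1 + 1) * int N2 + (2 * int N1 + 1) * (2 * int N2 + 1) * int N3"
proof -
  obtain a1 a2 a3 where aa: "a = (a1,a2,a3)" by (cases a) auto
  let ?P = "2 * int N1 + 1" and ?Q = "2 * int N2 + 1"
  have b1: "\<bar>a1\<bar> \<le> int N1" "\<bar>a2\<bar> \<le> int N2" "\<bar>a3\<bar> \<le> int N3" using assms aa Delta_def by auto
  have "\<bar>kron N1 N2 a\<bar> \<le> \<bar>a1\<bar> + \<bar>?P * a2\<bar> + \<bar>?P * ?Q * a3\<bar>"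
    unfolding aa kron_def by simp
  also have "\<bar>?P * a2\<bar> \<le> ?P * int N2" using b1 by (simp add: abs_mult)
  also have "\<bar>?P * ?Q * a3\<bar> \<le> ?P * ?Q * int N3" using b1 by (simp add: abs_mult)
  finally show ?thesis using b1 by simp
qed

lemma ph_kron: "ph k (t, of_int (2 * int N1 + 1) * t, of_int ((2 * int N1 + 1) * (2 * int N2 + 1)) * t)
   = of_int (kron N1 N2 k) * t"
  unfolding ph_def kron_def by (simp add: algebra_simps)

lemma trig_unique:
  assumes eq: "\<And>\<theta>. trig_eval (Delta N1 N2 N3) q \<theta> = trig_eval (Delta N1 N2 N3) p \<theta>"
    and k0: "k0 \<in> Delta N1 N2 N3"
  shows "q k0 = p k0"
proof -
  define B where "B = int N1 + (2 * int N1 + 1) * int N2 + (2 * int N1 + 1) * (2 * int N2 + 1) * int N3"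
  define M where "M = nat (2 * B + 1)"
  have B0: "B \<ge> 0" unfolding B_def by simp
  have iM: "int M = 2 * B + 1" unfolding M_def using B0 by simp
  have bd: "\<bar>kron N1 N2 k - kron N1 N2 k'\<bar> < int M" if "k \<in> Delta N1 N2 N3" "k' \<in> Delta N1 N2 N3" for k k'
    using kron_bound[OF that(1)] kron_bound[OF that(2)] unfolding iM B_def[symmetric] by linarith
  show ?thesis
  proof (rule coef_unique[OF finite_Delta kron_inj bd _ k0])
    fix t
    show "(\<Sum>k\<in>Delta N1 N2 N3. q k * cis (of_int (kron N1 N2 k) * t)) = (\<Sum>k\<in>Delta N1 N2 N3. p k * cis (of_int (kron N1 N2 k) * t))"
      using eq[of "(t, of_int (2 * int N1 + 1) * t, of_int ((2 * int N1 + 1) * (2 * int N2 + 1)) * t)"]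
      unfolding trig_eval_cis ph_kron .
  qed
qed



definition negf :: "freq \<Rightarrow> freq" where
  "negf k = (- fst k, - fst (snd k), - snd (snd k))"

lemma negf_negf[simp]: "negf (negf k) = k" unfolding negf_def by simp
lemma negf_eq_iff[simp]: "negf a = negf b \<longleftrightarrow> a = b" unfolding negf_def by (auto simp: prod_eq_iff)
lemma negf_Delta[simp]: "negf k \<in> Delta N1 N2 N3 \<longleftrightarrow> k \<in> Delta N1 N2 N3"
  unfolding negf_def Delta_def by (cases k) auto
lemma ph_negf: "ph (negf k) \<theta> = - ph k \<theta>" unfolding ph_def negf_def by simp
lemma ph_fdiff: "ph (fdiff x y) \<theta> = ph x \<theta> - ph y \<theta>" unfolding ph_def fdiff_def by (simp add: algebra_simps)
lemma negf_fdiff: "negf (fdiff x y) = fdiff y x" unfolding negf_def fdiff_def by simp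
lemma fdiff_Delta: "x \<in> Sset N1 N2 N3 \<Longrightarrow> y \<in> Sset N1 N2 N3 \<Longrightarrow> fdiff x y \<in> Delta N1 N2 N3"
  unfolding fdiff_def Sset_def Delta_def by auto
lemma fdiff_zero_iff: "fdiff x y = (0,0,0) \<longleftrightarrow> x = y"
  unfolding fdiff_def by (auto simp: prod_eq_iff)

lemma sum_negf: "(\<Sum>k\<in>Delta N1 N2 N3. g (negf k)) = (\<Sum>k\<in>Delta N1 N2 N3. g k)"
  by (rule sum.reindex_bij_witness[of _ negf negf]) auto

lemma te_cnj: "cnj (trig_eval (Delta N1 N2 N3) q \<theta>) = trig_eval (Delta N1 N2 N3) (\<lambda>k. cnj (q (negf k))) \<theta>"
proof -
  have "cnj (trig_eval (Delta N1 N2 N3) q \<theta>) = (\<Sum>k\<in>Delta N1 N2 N3. cnj (q k) * cis (ph (negf k) \<theta>))"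
    unfolding trig_eval_cis by (simp add: cis_cnj ph_negf)
  also have "\<dots> = (\<Sum>k\<in>Delta N1 N2 N3. cnj (q (negf k)) * cis (ph k \<theta>))"
    using sum_negf[of "\<lambda>k. cnj (q (negf k)) * cis (ph k \<theta>)"] by simp
  finally show ?thesis unfolding trig_eval_cis .
qed

lemma Vchar: "q \<in> Vsp N1 N2 N3 \<longleftrightarrow> (\<forall>k. k \<notin> Delta N1 N2 N3 \<longrightarrow> q k = 0) \<and> (\<forall>k. q (negf k) = cnj (q k))"
proof
  assume q: "q \<in> Vsp N1 N2 N3"
  then have z: "\<forall>k. k \<notin> Delta N1 N2 N3 \<longrightarrow> q k = 0" unfolding Vsp_def by auto
  have "\<And>\<theta>. trig_eval (Delta N1 N2 N3) q \<theta> = trig_eval (Delta N1 N2 N3) (\<lambda>k. cnj (q (negf k))) \<theta>"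
    using q unfolding Vsp_def by (auto simp: te_cnj[symmetric] Reals_cnj_iff)
  then have e: "\<And>k. k \<in> Delta N1 N2 N3 \<Longrightarrow> q k = cnj (q (negf k))" using trig_unique by blast
  have "q (negf k) = cnj (q k)" for k
  proof (cases "k \<in> Delta N1 N2 N3")
    case True then show ?thesis using e[of "negf k"] by simp
  next
    case False then show ?thesis using z by (metis complex_cnj_zero negf_Delta)
  qed
  with z show "(\<forall>k. k \<notin> Delta N1 N2 N3 \<longrightarrow> q k = 0) \<and> (\<forall>k. q (negf k) = cnj (q k))" by blast
next
  assume a: "(\<forall>k. k \<notin> Delta N1 N2 N3 \<longrightarrow> q k = 0) \<and> (\<forall>k. q (negf k) = cnj (q k))"
  then have "(\<lambda>k. cnj (q (negf k))) = q" by auto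
  then have "cnj (trig_eval (Delta N1 N2 N3) q \<theta>) = trig_eval (Delta N1 N2 N3) q \<theta>" for \<theta>
    by (simp add: te_cnj)
  then show "q \<in> Vsp N1 N2 N3" using a unfolding Vsp_def by (auto simp: Reals_cnj_iff)
qed

lemma Vsp_zero: "(\<lambda>_. 0) \<in> Vsp N1 N2 N3" unfolding Vchar by simp

lemma Vsp_lin: "p \<in> Vsp N1 N2 N3 \<Longrightarrow> q \<in> Vsp N1 N2 N3 \<Longrightarrow>
   (\<lambda>k. complex_of_real a * p k + complex_of_real b * q k) \<in> Vsp N1 N2 N3"
  unfolding Vchar by auto

definition conv :: "nat \<Rightarrow> nat \<Rightarrow> nat \<Rightarrow> (freq \<Rightarrow> complex) \<Rightarrow> (freq \<Rightarrow> complex) \<Rightarrow> freq \<Rightarrow> complex" where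
  "conv N1 N2 N3 F G k = (\<Sum>x\<in>Sset N1 N2 N3. \<Sum>y\<in>Sset N1 N2 N3. if fdiff x y = k then F x * cnj (G y) else 0)"

lemma conv_out: "k \<notin> Delta N1 N2 N3 \<Longrightarrow> conv N1 N2 N3 F G k = 0"
  unfolding conv_def using fdiff_Delta by (auto intro!: sum.neutral)

lemma conv_negf: "conv N1 N2 N3 F F (negf k) = cnj (conv N1 N2 N3 F F k)"
proof -
  have "cnj (conv N1 N2 N3 F F k) = (\<Sum>x\<in>Sset N1 N2 N3. \<Sum>y\<in>Sset N1 N2 N3. if fdiff x y = k then F y * cnj (F x) else 0)"
    unfolding conv_def by (simp add: if_distrib mult.commute cong: if_cong)
  also have "\<dots> = (\<Sum>y\<in>Sset N1 N2 N3. \<Sum>x\<in>Sset N1 N2 N3. if fdiff x y = k then F y * cnj (F x) else 0)"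
    by (rule sum.swap)
  also have "\<dots> = conv N1 N2 N3 F F (negf k)"
    unfolding conv_def
    by (intro sum.cong refl) (metis negf_fdiff negf_negf)
  finally show ?thesis by simp
qed

lemma sumconv_Vsp: "(\<lambda>k. \<Sum>j<r. conv N1 N2 N3 (F j) (F j) k) \<in> Vsp N1 N2 N3"
  unfolding Vchar by (simp add: conv_out conv_negf)

lemma te_prod: "trig_eval (Sset N1 N2 N3) F \<theta> * cnj (trig_eval (Sset N1 N2 N3) G \<theta>)
   = trig_eval (Delta N1 N2 N3) (conv N1 N2 N3 F G) \<theta>"
proof -
  have "trig_eval (Sset N1 N2 N3) F \<theta> * cnj (trig_eval (Sset N1 N2 N3) G \<theta>)
     = (\<Sum>x\<in>Sset N1 N2 N3. \<Sum>y\<in>Sset N1 N2 N3. F x * cnj (G y) * cis (ph (fdiff x y) \<theta>))"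
    unfolding trig_eval_cis cnj_sum sum_product
    by (intro sum.cong refl) (simp add: ph_fdiff cis_cnj mult_ac cis_mult)
  also have "\<dots> = (\<Sum>x\<in>Sset N1 N2 N3. \<Sum>y\<in>Sset N1 N2 N3. \<Sum>k\<in>Delta N1 N2 N3.
        if fdiff x y = k then F x * cnj (G y) * cis (ph k \<theta>) else 0)"
    using fdiff_Delta by (intro sum.cong refl) (simp add: sum.delta)
  also have "\<dots> = (\<Sum>k\<in>Delta N1 N2 N3. \<Sum>x\<in>Sset N1 N2 N3. \<Sum>y\<in>Sset N1 N2 N3.
        if fdiff x y = k then F x * cnj (G y) * cis (ph k \<theta>) else 0)"
    by (simp add: sum.swap[of _ "Delta N1 N2 N3"] sum.swap[of _ "Sset N1 N2 N3" "Delta N1 N2 N3"])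
  also have "\<dots> = trig_eval (Delta N1 N2 N3) (conv N1 N2 N3 F G) \<theta>"
    unfolding trig_eval_cis conv_def sum_distrib_right
    by (intro sum.cong refl) (simp add: if_distrib)
  finally show ?thesis .
qed

lemma te_sumconv: "trig_eval (Delta N1 N2 N3) (\<lambda>k. \<Sum>j<r. conv N1 N2 N3 (F j) (F j) k) \<theta>
   = (\<Sum>j<r. complex_of_real ((cmod (trig_eval (Sset N1 N2 N3) (F j) \<theta>))\<^sup>2))"
proof -
  have "trig_eval (Delta N1 N2 N3) (\<lambda>k. \<Sum>j<r. conv N1 N2 N3 (F j) (F j) k) \<theta>
     = (\<Sum>j<r. trig_eval (Delta N1 N2 N3) (conv N1 N2 N3 (F j) (F j)) \<theta>)"
    unfolding trig_eval_cis sum_distrib_right by (rule sum.swap)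
  also have "\<dots> = (\<Sum>j<r. trig_eval (Sset N1 N2 N3) (F j) \<theta> * cnj (trig_eval (Sset N1 N2 N3) (F j) \<theta>))"
    by (simp only: te_prod)
  finally show ?thesis by (simp only: complex_norm_square)
qed

lemma Q_intro:
  assumes "\<forall>j<r. \<forall>k. k \<notin> Sset N1 N2 N3 \<longrightarrow> F j k = 0"
  shows "(\<lambda>k. \<Sum>j<(r::nat). conv N1 N2 N3 (F j) (F j) k) \<in> Qset N1 N2 N3"
  unfolding Qset_def mem_Collect_eq using sumconv_Vsp[where r=r and F=F] assms te_sumconv[where r=r and F=F]
  by blast

lemma Q_elim:
  assumes "q \<in> Qset N1 N2 N3"
  obtains r F where "\<forall>j<r. \<forall>k. k \<notin> Sset N1 N2 N3 \<longrightarrow> F j k = 0" "q = (\<lambda>k. \<Sum>j<(r::nat). conv N1 N2 N3 (F j) (F j) k)"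
proof -
  from assms obtain r F where V: "q \<in> Vsp N1 N2 N3" and supp: "\<forall>j<r. \<forall>k. k \<notin> Sset N1 N2 N3 \<longrightarrow> F j k = 0" and
    e: "\<And>\<theta>. trig_eval (Delta N1 N2 N3) q \<theta> = (\<Sum>j<(r::nat). complex_of_real ((cmod (trig_eval (Sset N1 N2 N3) (F j) \<theta>))\<^sup>2))"
    unfolding Qset_def mem_Collect_eq by blast
  have "q = (\<lambda>k. \<Sum>j<r. conv N1 N2 N3 (F j) (F j) k)"
  proof
    fix k show "q k = (\<Sum>j<r. conv N1 N2 N3 (F j) (F j) k)"
    proof (cases "k \<in> Delta N1 N2 N3")
      case True
      show ?thesis
        by (rule trig_unique[OF _ True]) (simp only: e te_sumconv)
    next
      case False
      have "q k = 0" using V False unfolding Vchar by blast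
      then show ?thesis using conv_out[OF False] by simp
    qed
  qed
  then show ?thesis using that supp by blast
qed



definition quadS :: "nat \<Rightarrow> nat \<Rightarrow> nat \<Rightarrow> (freq \<Rightarrow> complex) \<Rightarrow> (freq \<Rightarrow> complex) \<Rightarrow> complex" where
  "quadS N1 N2 N3 \<Phi> F = (\<Sum>x\<in>Sset N1 N2 N3. \<Sum>y\<in>Sset N1 N2 N3. F x * cnj (F y) * \<Phi> (fdiff x y))"

lemma LPhi_conv: "LPhi N1 N2 N3 \<Phi> (conv N1 N2 N3 F F) = quadS N1 N2 N3 \<Phi> F"
proof -
  have "LPhi N1 N2 N3 \<Phi> (conv N1 N2 N3 F F) = (\<Sum>k\<in>Delta N1 N2 N3. \<Sum>x\<in>Sset N1 N2 N3. \<Sum>y\<in>Sset N1 N2 N3.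
        if fdiff x y = k then F x * cnj (F y) * \<Phi> k else 0)"
    unfolding LPhi_def conv_def sum_distrib_right by (intro sum.cong refl) simp
  also have "\<dots> = (\<Sum>x\<in>Sset N1 N2 N3. \<Sum>k\<in>Delta N1 N2 N3. \<Sum>y\<in>Sset N1 N2 N3.
        if fdiff x y = k then F x * cnj (F y) * \<Phi> k else 0)"
    by (rule sum.swap)
  also have "\<dots> = (\<Sum>x\<in>Sset N1 N2 N3. \<Sum>y\<in>Sset N1 N2 N3. \<Sum>k\<in>Delta N1 N2 N3.
        if fdiff x y = k then F x * cnj (F y) * \<Phi> k else 0)"
    by (rule sum.cong[OF refl], rule sum.swap)
  also have "\<dots> = quadS N1 N2 N3 \<Phi> F"
    unfolding quadS_def using fdiff_Delta by (intro sum.cong refl) (simp add: sum.delta)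
  finally show ?thesis .
qed

lemma LPhi_sum: "LPhi N1 N2 N3 \<Phi> (\<lambda>k. \<Sum>j<r. g j k) = (\<Sum>j<r. LPhi N1 N2 N3 \<Phi> (g j))"
  unfolding LPhi_def sum_distrib_right by (rule sum.swap)

lemma sidx_S: "i < (N1+1)*(N2+1)*(N3+1) \<Longrightarrow> sidx N2 N3 i \<in> Sset N1 N2 N3"
proof -
  assume i: "i < (N1+1)*(N2+1)*(N3+1)"
  have "i < (N1+1) * ((N2+1)*(N3+1))" using i by (simp only: mult.assoc)
  then have "i div ((N2+1)*(N3+1)) < N1 + 1" by (rule less_mult_imp_div_less)
  moreover have "(i div (N3+1)) mod (N2+1) < N2 + 1" by simp
  moreover have "i mod (N3+1) < N3 + 1" by simp
  ultimately show ?thesis unfolding sidx_def Sset_def by auto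
qed

lemma sidx_surj: "s \<in> Sset N1 N2 N3 \<Longrightarrow> \<exists>i < (N1+1)*(N2+1)*(N3+1). sidx N2 N3 i = s"
proof -
  assume s: "s \<in> Sset N1 N2 N3"
  obtain a b c where abc: "s = (int a, int b, int c)" "a \<le> N1" "b \<le> N2" "c \<le> N3"
  proof -
    have "\<exists>a b c. s = (int a, int b, int c) \<and> a \<le> N1 \<and> b \<le> N2 \<and> c \<le> N3"
      using s unfolding Sset_def apply (cases s) apply simp
      by (metis nat_0_le nat_le_iff)
    then show ?thesis using that by blast
  qed
  define i where "i = a * ((N2+1)*(N3+1)) + b * (N3+1) + c"
  have ii: "i = c + (a * (N2+1) + b) * (N3+1)" unfolding i_def by (simp add: algebra_simps)
  have d1: "i div (N3+1) = a * (N2+1) + b" unfolding ii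
    by (subst div_mult_self1) (use abc in auto)
  have m1: "i mod (N3+1) = c" unfolding ii
    by (subst mod_mult_self1) (use abc in auto)
  have d2: "i div ((N2+1)*(N3+1)) = a"
  proof -
    have "i div ((N2+1)*(N3+1)) = i div (N3+1) div (N2+1)" by (simp only: mult.commute[of "N2+1"] div_mult2_eq)
    also have "\<dots> = (b + a*(N2+1)) div (N2+1)" unfolding d1 by (rule arg_cong[where f="\<lambda>z. z div (N2+1)"]) (rule add.commute)
    also have "\<dots> = a" by (subst div_mult_self1) (use abc in auto)
    finally show ?thesis .
  qed
  have m2: "(i div (N3+1)) mod (N2+1) = b"
  proof -
    have "(i div (N3+1)) mod (N2+1) = (b + a*(N2+1)) mod (N2+1)" unfolding d1 by (rule arg_cong[where f="\<lambda>z. z mod (N2+1)"]) (rule add.commute)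
    also have "\<dots> = b" by (subst mod_mult_self1) (use abc in auto)
    finally show ?thesis .
  qed
  have "i < (N1+1)*(N2+1)*(N3+1)"
  proof -
    have "i < a * ((N2+1)*(N3+1)) + (N2+1)*(N3+1)"
    proof -
      have "b * (N3+1) + c < (N2+1)*(N3+1)"
      proof -
        have "b * (N3+1) + c < b * (N3+1) + (N3+1)" using abc by simp
        also have "\<dots> = (b+1)*(N3+1)" by simp
        also have "\<dots> \<le> (N2+1)*(N3+1)" using abc by (intro mult_right_mono) auto
        finally show ?thesis .
      qed
      then show ?thesis unfolding i_def by simp
    qed
    also have "\<dots> = (a+1) * ((N2+1)*(N3+1))" by simp
    also have "\<dots> \<le> (N1+1) * ((N2+1)*(N3+1))" using abc by (intro mult_right_mono) auto
    finally show ?thesis by (simp only: mult.assoc)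
  qed
  moreover have "sidx N2 N3 i = s" unfolding sidx_def d2 m2 m1 abc by simp
  ultimately show ?thesis by (intro exI[of _ i]) simp
qed

lemma card_Sset: "card (Sset N1 N2 N3) = (N1+1)*(N2+1)*(N3+1)"
proof -
  have "card (Sset N1 N2 N3) = card {0..int N1} * (card {0..int N2} * card {0..int N3})"
    by (simp only: Sset_eq card_cartesian_product)
  also have "\<dots> = (N1+1)*((N2+1)*(N3+1))"
  proof -
    have cN: "\<And>N. card {0..int N} = N+1" by simp
    show ?thesis by (simp only: cN)
  qed
  finally show ?thesis by (simp only: mult.assoc)
qed

lemma sidx_bij: "bij_betw (sidx N2 N3) {..<(N1+1)*(N2+1)*(N3+1)} (Sset N1 N2 N3)"
proof -
  have im: "sidx N2 N3 ` {..<(N1+1)*(N2+1)*(N3+1)} = Sset N1 N2 N3"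
  proof
    show "sidx N2 N3 ` {..<(N1+1)*(N2+1)*(N3+1)} \<subseteq> Sset N1 N2 N3" using sidx_S by auto
    show "Sset N1 N2 N3 \<subseteq> sidx N2 N3 ` {..<(N1+1)*(N2+1)*(N3+1)}"
    proof
      fix s assume "s \<in> Sset N1 N2 N3"
      from sidx_surj[OF this] obtain i where "i < (N1+1)*(N2+1)*(N3+1)" "sidx N2 N3 i = s" by blast
      then show "s \<in> sidx N2 N3 ` {..<(N1+1)*(N2+1)*(N3+1)}" by (intro image_eqI[of _ _ i]) auto
    qed
  qed
  have "card (sidx N2 N3 ` {..<(N1+1)*(N2+1)*(N3+1)}) = card {..<(N1+1)*(N2+1)*(N3+1)}"
    unfolding im card_Sset by simp
  then have "inj_on (sidx N2 N3) {..<(N1+1)*(N2+1)*(N3+1)}"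
    by (subst inj_on_iff_eq_card) auto
  then show ?thesis using im unfolding bij_betw_def by blast
qed

lemma sum_S_sidx: "(\<Sum>s\<in>Sset N1 N2 N3. g s) = (\<Sum>i<(N1+1)*(N2+1)*(N3+1). g (sidx N2 N3 i))"
  using sum.reindex_bij_betw[OF sidx_bij, of g] by simp

lemma quadS_sidx: "quadS N1 N2 N3 \<Phi> F = (\<Sum>i<(N1+1)*(N2+1)*(N3+1). \<Sum>j<(N1+1)*(N2+1)*(N3+1).
    F (sidx N2 N3 i) * cnj (F (sidx N2 N3 j)) * \<Phi> (fdiff (sidx N2 N3 i) (sidx N2 N3 j)))"
  unfolding quadS_def sum_S_sidx ..

lemma herm_pos_quadS: "herm_pos N1 N2 N3 \<Phi> \<Longrightarrow> 0 \<le> quadS N1 N2 N3 \<Phi> F"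
proof -
  assume h: "herm_pos N1 N2 N3 \<Phi>"
  show ?thesis unfolding quadS_sidx
    using h[unfolded herm_pos_def, rule_format, of "(N1+1)*(N2+1)*(N3+1)" "sidx N2 N3" "\<lambda>i. F (sidx N2 N3 i)"]
      sidx_S by blast
qed

lemma sum_pull:
  assumes "finite S" "\<forall>i<n. x i \<in> S"
  shows "(\<Sum>s\<in>S. (\<Sum>i<n. if x i = s then (\<xi> i :: complex) else 0) * g s) = (\<Sum>i<(n::nat). \<xi> i * g (x i))"
proof -
  have "(\<Sum>s\<in>S. (\<Sum>i<n. if x i = s then \<xi> i else 0) * g s) = (\<Sum>s\<in>S. \<Sum>i<n. if x i = s then \<xi> i * g s else 0)"
    by (subst sum_distrib_right) (auto intro!: sum.cong)
  also have "\<dots> = (\<Sum>i<n. \<Sum>s\<in>S. if x i = s then \<xi> i * g s else 0)" by (rule sum.swap)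
  also have "\<dots> = (\<Sum>i<n. \<xi> i * g (x i))" using assms by (intro sum.cong refl) (simp add: sum.delta)
  finally show ?thesis .
qed

lemma quad_to_herm:
  assumes "\<And>F. 0 \<le> quadS N1 N2 N3 \<Phi> F"
  shows "herm_pos N1 N2 N3 \<Phi>"
  unfolding herm_pos_def
proof (intro allI impI)
  fix n :: nat and x :: "nat \<Rightarrow> freq" and \<xi> :: "nat \<Rightarrow> complex"
  assume x: "\<forall>i<n. x i \<in> Sset N1 N2 N3"
  define F where "F s = (\<Sum>i<n. if x i = s then \<xi> i else 0)" for s
  have inner: "(\<Sum>y\<in>Sset N1 N2 N3. cnj (F y) * \<Phi> (fdiff s y)) = (\<Sum>j<n. cnj (\<xi> j) * \<Phi> (fdiff s (x j)))" for s
  proof -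
    have "(\<Sum>y\<in>Sset N1 N2 N3. F y * cnj (\<Phi> (fdiff s y))) = (\<Sum>j<n. \<xi> j * cnj (\<Phi> (fdiff s (x j))))"
      unfolding F_def by (rule sum_pull[OF finite_Sset x])
    then have "cnj (\<Sum>y\<in>Sset N1 N2 N3. F y * cnj (\<Phi> (fdiff s y))) = cnj (\<Sum>j<n. \<xi> j * cnj (\<Phi> (fdiff s (x j))))"
      by simp
    then show ?thesis by (simp add: cnj_sum)
  qed
  have "quadS N1 N2 N3 \<Phi> F = (\<Sum>s\<in>Sset N1 N2 N3. F s * (\<Sum>y\<in>Sset N1 N2 N3. cnj (F y) * \<Phi> (fdiff s y)))"
    unfolding quadS_def by (simp add: sum_distrib_left mult.assoc)
  also have "\<dots> = (\<Sum>s\<in>Sset N1 N2 N3. F s * (\<Sum>j<n. cnj (\<xi> j) * \<Phi> (fdiff s (x j))))"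
    by (simp only: inner)
  also have "\<dots> = (\<Sum>i<n. \<xi> i * (\<Sum>j<n. cnj (\<xi> j) * \<Phi> (fdiff (x i) (x j))))"
    unfolding F_def by (rule sum_pull[OF finite_Sset x])
  also have "\<dots> = (\<Sum>i<n. \<Sum>j<n. \<xi> i * cnj (\<xi> j) * \<Phi> (fdiff (x i) (x j)))"
    by (simp add: sum_distrib_left mult.assoc)
  finally show "0 \<le> (\<Sum>i<n. \<Sum>j<n. \<xi> i * cnj (\<xi> j) * \<Phi> (fdiff (x i) (x j)))"
    using assms[of F] by simp
qed



lemma herm_pos_two:
  assumes h: "herm_pos N1 N2 N3 \<Phi>" and s: "s \<in> Sset N1 N2 N3" and t: "t \<in> Sset N1 N2 N3"
  shows "0 \<le> \<Phi> (fdiff s s) + cnj c * \<Phi> (fdiff s t) + c * \<Phi> (fdiff t s) + c * cnj c * \<Phi> (fdiff t t)"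
proof -
  have "0 \<le> (\<Sum>i<(2::nat). \<Sum>j<(2::nat). (\<lambda>i. if i = 0 then 1 else c) i * cnj ((\<lambda>i. if i = 0 then 1 else c) j) *
      \<Phi> (fdiff ((\<lambda>i. if i = 0 then s else t) i) ((\<lambda>i. if i = 0 then s else t) j)))"
    using h[unfolded herm_pos_def, rule_format, of 2 "\<lambda>i. if i = 0 then s else t" "\<lambda>i. if i = 0 then 1 else c"] s t
    by auto
  then show ?thesis by (simp add: numeral_2_eq_2 add.assoc)
qed

lemma herm_pos_herm:
  assumes h: "herm_pos N1 N2 N3 \<Phi>" and k: "k \<in> Delta N1 N2 N3"
  shows "\<Phi> (negf k) = cnj (\<Phi> k)"
proof -
  obtain a b c where kk: "k = (a,b,c)" by (cases k) auto
  define s where "s = (max a 0, max b 0, max c 0)"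
  define t where "t = (max (-a) 0, max (-b) 0, max (-c) 0)"
  have sS: "s \<in> Sset N1 N2 N3" and tS: "t \<in> Sset N1 N2 N3" using k unfolding kk s_def t_def Sset_def Delta_def by auto
  have st: "fdiff s t = k" and ts: "fdiff t s = negf k" and ss: "fdiff s s = (0,0,0)" and tt: "fdiff t t = (0,0,0)"
    unfolding s_def t_def kk fdiff_def negf_def by auto
  have p1: "0 \<le> \<Phi> (0,0,0) + \<Phi> k + \<Phi> (negf k) + \<Phi> (0,0,0)"
    using herm_pos_two[OF h sS tS, of 1] unfolding st ts ss tt by simp
  have p2: "0 \<le> \<Phi> (0,0,0) + (-\<i>) * \<Phi> k + \<i> * \<Phi> (negf k) + \<Phi> (0,0,0)"
    using herm_pos_two[OF h sS tS, of \<i>] unfolding st ts ss tt by simp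
  have p0: "0 \<le> \<Phi> (0,0,0) + 0 * \<Phi> k + 0 * \<Phi> (negf k) + 0 * \<Phi> (0,0,0)"
    using herm_pos_two[OF h sS tS, of 0] unfolding st ts ss tt by simp
  from p0 p1 p2 show ?thesis
    by (auto simp: less_eq_complex_def complex_eq_iff)
qed

lemma quad_aux: "(D::real) > 0 \<Longrightarrow> (- x / D) * x + (- x / D)^2 * (D - 1) = - (x^2) / D^2"
  by (simp add: field_simps power2_eq_square)

lemma quad_real_zero:
  fixes z g :: complex
  assumes "\<And>s::real. 0 \<le> complex_of_real s * z + complex_of_real (s^2) * g"
  shows "z = 0"
proof -
  have a1: "0 \<le> z + g" using assms[of 1] by simp
  have a2: "0 \<le> - z + g" using assms[of "-1"] by simp
  have imz: "Im z = 0" and img: "Im g = 0" using a1 a2 by (auto simp: less_eq_complex_def)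
  have rg: "Re g \<ge> 0" using a1 a2 by (auto simp: less_eq_complex_def)
  define xr where "xr = Re z"
  define s where "s = - xr / (Re g + 1)"
  have "0 \<le> s * xr + s^2 * Re g" using assms[of s] by (simp add: less_eq_complex_def power2_eq_square xr_def)
  also have "s * xr + s^2 * Re g = - (xr^2) / (Re g + 1)^2"
    unfolding s_def using quad_aux[of "Re g + 1" xr] rg by simp
  finally have "xr^2 \<le> 0" using rg by (simp add: divide_nonpos_pos field_simps) 
  then have "xr = 0" by simp
  then show ?thesis using imz unfolding xr_def by (simp add: complex_eq_iff)
qed


lemma psd_expand:
  fixes c :: "nat \<Rightarrow> nat \<Rightarrow> complex"
  assumes i0: "i0 < n"
  shows "(\<Sum>i<n. \<Sum>j<n. (w i + t * (if i = i0 then 1 else 0)) * cnj (w j + t * (if j = i0 then 1 else 0)) * c i j)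
    = (\<Sum>i<n. \<Sum>j<n. w i * cnj (w j) * c i j) + cnj t * (\<Sum>i<n. w i * c i i0) + t * (\<Sum>j<n. cnj (w j) * c i0 j)
      + t * cnj t * c i0 i0"
proof -
  have "(\<Sum>i<n. \<Sum>j<n. (w i + t * (if i = i0 then 1 else 0)) * cnj (w j + t * (if j = i0 then 1 else 0)) * c i j)
     = (\<Sum>i<n. \<Sum>j<n. w i * cnj (w j) * c i j + (if j = i0 then cnj t * (w i * c i i0) else 0)
         + (if i = i0 then t * (cnj (w j) * c i0 j) else 0) + (if i = i0 \<and> j = i0 then t * cnj t * c i0 i0 else 0))"
    by (intro sum.cong refl) (auto simp: algebra_simps)
  also have "\<dots> = (\<Sum>i<n. \<Sum>j<n. w i * cnj (w j) * c i j) + (\<Sum>i<n. \<Sum>j<n. if j = i0 then cnj t * (w i * c i i0) else 0)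
         + (\<Sum>i<n. \<Sum>j<n. if i = i0 then t * (cnj (w j) * c i0 j) else 0) + (\<Sum>i<n. \<Sum>j<n. if i = i0 \<and> j = i0 then t * cnj t * c i0 i0 else 0)"
    by (simp add: sum.distrib)
  also have "(\<Sum>i<n. \<Sum>j<n. if j = i0 then cnj t * (w i * c i i0) else 0) = cnj t * (\<Sum>i<n. w i * c i i0)"
    using i0 by (simp add: sum.delta' sum_distrib_left)
  also have "(\<Sum>i<n. \<Sum>j<n. if i = i0 then t * (cnj (w j) * c i0 j) else 0) = t * (\<Sum>j<n. cnj (w j) * c i0 j)"
  proof -
    have "(\<Sum>i<n. \<Sum>j<n. if i = i0 then t * (cnj (w j) * c i0 j) else 0)
      = (\<Sum>i<n. if i = i0 then (\<Sum>j<n. t * (cnj (w j) * c i0 j)) else 0)"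
      by (intro sum.cong refl) auto
    also have "\<dots> = t * (\<Sum>j<n. cnj (w j) * c i0 j)" using i0 by (simp add: sum.delta' sum_distrib_left)
    finally show ?thesis .
  qed
  also have "(\<Sum>i<n. \<Sum>j<n. if i = i0 \<and> j = i0 then t * cnj t * c i0 i0 else 0) = t * cnj t * c i0 i0"
  proof -
    have "(\<Sum>i<n. \<Sum>j<n. if i = i0 \<and> j = i0 then t * cnj t * c i0 i0 else 0)
       = (\<Sum>i<n. if i = i0 then (\<Sum>j<n. if j = i0 then t * cnj t * c i0 i0 else 0) else 0)"
      by (intro sum.cong refl) auto
    also have "\<dots> = t * cnj t * c i0 i0" using i0 by (simp add: sum.delta')
    finally show ?thesis .
  qed
  finally show ?thesis .
qed

lemma psd_kernel:
  fixes c :: "nat \<Rightarrow> nat \<Rightarrow> complex"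
  assumes psd: "\<And>\<xi>. 0 \<le> (\<Sum>i<n. \<Sum>j<n. \<xi> i * cnj (\<xi> j) * c i j)"
    and w0: "(\<Sum>i<n. \<Sum>j<n. w i * cnj (w j) * c i j) = 0" and i0: "i0 < n"
  shows "(\<Sum>i<n. w i * c i i0) = 0"
proof -
  define \<alpha> where "\<alpha> = (\<Sum>i<n. w i * c i i0)"
  define \<beta> where "\<beta> = (\<Sum>j<n. cnj (w j) * c i0 j)"
  define \<gamma> where "\<gamma> = c i0 i0"
  have E: "0 \<le> cnj t * \<alpha> + t * \<beta> + t * cnj t * \<gamma>" for t
    using psd[of "\<lambda>i. w i + t * (if i = i0 then 1 else 0)"] psd_expand[OF i0, of w t c] w0
    unfolding \<alpha>_def \<beta>_def \<gamma>_def by simp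
  have z1: "\<alpha> + \<beta> = 0"
  proof (rule quad_real_zero)
    fix s :: real
    show "0 \<le> complex_of_real s * (\<alpha> + \<beta>) + complex_of_real (s^2) * \<gamma>"
      using E[of "complex_of_real s"] by (simp add: algebra_simps power2_eq_square)
  qed
  have z2: "\<i> * (\<beta> - \<alpha>) = 0"
  proof (rule quad_real_zero)
    fix s :: real
    have "cnj (\<i> * complex_of_real s) * \<alpha> + (\<i> * complex_of_real s) * \<beta> + (\<i> * complex_of_real s) * cnj (\<i> * complex_of_real s) * \<gamma>
       = complex_of_real s * (\<i> * (\<beta> - \<alpha>)) + complex_of_real (s^2) * \<gamma>"
      by (simp add: algebra_simps power2_eq_square)
    then show "0 \<le> complex_of_real s * (\<i> * (\<beta> - \<alpha>)) + complex_of_real (s^2) * \<gamma>"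
      using E[of "\<i> * complex_of_real s"] by simp
  qed
  from z1 z2 have "\<alpha> = 0" by (simp add: algebra_simps)
  then show ?thesis unfolding \<alpha>_def .
qed

abbreviation nS :: "nat \<Rightarrow> nat \<Rightarrow> nat \<Rightarrow> nat" where "nS N1 N2 N3 \<equiv> (N1+1)*(N2+1)*(N3+1)"

lemma Amat_carrier: "Amat N1 N2 N3 \<Phi> \<in> carrier_mat (nS N1 N2 N3) (nS N1 N2 N3)"
  unfolding Amat_def by simp

lemma Amat_mult:
  assumes "i < nS N1 N2 N3" "v \<in> carrier_vec (nS N1 N2 N3)"
  shows "(Amat N1 N2 N3 \<Phi> *\<^sub>v v) $ i = (\<Sum>j<nS N1 N2 N3. \<Phi> (fdiff (sidx N2 N3 j) (sidx N2 N3 i)) * v $ j)"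
  using assms unfolding Amat_def
  by (simp add: scalar_prod_def atLeast0LessThan)

lemma det_Amat_zero_iff:
  "det (Amat N1 N2 N3 \<Phi>) = 0 \<longleftrightarrow> (\<exists>w. (\<exists>i<nS N1 N2 N3. w i \<noteq> 0) \<and>
      (\<forall>i<nS N1 N2 N3. (\<Sum>j<nS N1 N2 N3. \<Phi> (fdiff (sidx N2 N3 j) (sidx N2 N3 i)) * w j) = 0))"
proof
  assume "det (Amat N1 N2 N3 \<Phi>) = 0"
  then obtain v where v: "v \<in> carrier_vec (nS N1 N2 N3)" "v \<noteq> 0\<^sub>v (nS N1 N2 N3)" "Amat N1 N2 N3 \<Phi> *\<^sub>v v = 0\<^sub>v (nS N1 N2 N3)"
    using det_0_iff_vec_prod_zero_field[OF Amat_carrier] by blast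
  have "\<exists>i<nS N1 N2 N3. v $ i \<noteq> 0"
  proof (rule ccontr)
    assume "\<not> ?thesis"
    then have "v = 0\<^sub>v (nS N1 N2 N3)" using v(1) by (intro eq_vecI) auto
    with v(2) show False by simp
  qed
  moreover have "\<forall>i<nS N1 N2 N3. (\<Sum>j<nS N1 N2 N3. \<Phi> (fdiff (sidx N2 N3 j) (sidx N2 N3 i)) * v $ j) = 0"
  proof (intro allI impI)
    fix i assume i: "i < nS N1 N2 N3"
    have "(Amat N1 N2 N3 \<Phi> *\<^sub>v v) $ i = 0" using v(3) i by simp
    then show "(\<Sum>j<nS N1 N2 N3. \<Phi> (fdiff (sidx N2 N3 j) (sidx N2 N3 i)) * v $ j) = 0"
      using Amat_mult[OF i v(1)] by simp
  qed
  ultimately show "\<exists>w. (\<exists>i<nS N1 N2 N3. w i \<noteq> 0) \<and>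
      (\<forall>i<nS N1 N2 N3. (\<Sum>j<nS N1 N2 N3. \<Phi> (fdiff (sidx N2 N3 j) (sidx N2 N3 i)) * w j) = 0)"
    by (intro exI[of _ "\<lambda>j. v $ j"]) auto
next
  assume "\<exists>w. (\<exists>i<nS N1 N2 N3. w i \<noteq> 0) \<and>
      (\<forall>i<nS N1 N2 N3. (\<Sum>j<nS N1 N2 N3. \<Phi> (fdiff (sidx N2 N3 j) (sidx N2 N3 i)) * w j) = 0)"
  then obtain w where w1: "\<exists>i<nS N1 N2 N3. w i \<noteq> 0"
    and w2: "\<forall>i<nS N1 N2 N3. (\<Sum>j<nS N1 N2 N3. \<Phi> (fdiff (sidx N2 N3 j) (sidx N2 N3 i)) * w j) = 0" by blast
  define v where "v = vec (nS N1 N2 N3) w"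
  have vc: "v \<in> carrier_vec (nS N1 N2 N3)" unfolding v_def by simp
  have "v \<noteq> 0\<^sub>v (nS N1 N2 N3)"
  proof
    assume "v = 0\<^sub>v (nS N1 N2 N3)"
    then have "\<forall>i<nS N1 N2 N3. w i = 0" unfolding v_def by (metis index_vec index_zero_vec(1))
    with w1 show False by blast
  qed
  moreover have "Amat N1 N2 N3 \<Phi> *\<^sub>v v = 0\<^sub>v (nS N1 N2 N3)"
  proof (rule eq_vecI)
    show "dim_vec (Amat N1 N2 N3 \<Phi> *\<^sub>v v) = dim_vec (0\<^sub>v (nS N1 N2 N3))" unfolding Amat_def by simp
    fix i assume "i < dim_vec (0\<^sub>v (nS N1 N2 N3))"
    then have i: "i < nS N1 N2 N3" by simp
    have "(\<Sum>j<nS N1 N2 N3. \<Phi> (fdiff (sidx N2 N3 j) (sidx N2 N3 i)) * v $ j)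
       = (\<Sum>j<nS N1 N2 N3. \<Phi> (fdiff (sidx N2 N3 j) (sidx N2 N3 i)) * w j)"
      unfolding v_def by (intro sum.cong refl) simp
    then show "(Amat N1 N2 N3 \<Phi> *\<^sub>v v) $ i = 0\<^sub>v (nS N1 N2 N3) $ i"
      using Amat_mult[OF i vc] w2 i by simp
  qed
  ultimately show "det (Amat N1 N2 N3 \<Phi>) = 0"
    using det_0_iff_vec_prod_zero_field[OF Amat_carrier] vc by blast
qed



definition uvec :: "freq \<Rightarrow> freq \<Rightarrow> complex" where
  "uvec k = (\<lambda>j. (if j = k then 1/2 else 0) + (if j = negf k then 1/2 else 0))"
definition vvec :: "freq \<Rightarrow> freq \<Rightarrow> complex" where
  "vvec k = (\<lambda>j. (if j = k then \<i>/2 else 0) - (if j = negf k then \<i>/2 else 0))"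

lemma negf_swap: "j = negf k \<longleftrightarrow> k = negf j" by auto

lemma uvec_V: "k \<in> Delta N1 N2 N3 \<Longrightarrow> uvec k \<in> Vsp N1 N2 N3"
  unfolding Vchar uvec_def by (auto simp: negf_swap)

lemma vvec_V: "k \<in> Delta N1 N2 N3 \<Longrightarrow> vvec k \<in> Vsp N1 N2 N3"
  unfolding Vchar vvec_def by (auto simp: negf_swap)

lemma uvec_neg: "uvec (negf k) = uvec k"
  unfolding uvec_def by (auto simp: negf_swap)

lemma vvec_neg: "vvec (negf k) = (\<lambda>j. complex_of_real (-1) * vvec k j + complex_of_real 0 * vvec k j)"
  unfolding vvec_def by (auto simp: negf_swap)

lemma decomp:
  assumes q: "q \<in> Vsp N1 N2 N3"
  shows "q = (\<lambda>j. \<Sum>k\<in>Delta N1 N2 N3. complex_of_real (Re (q k)) * uvec k j + complex_of_real (Im (q k)) * vvec k j)"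
proof
  fix j
  have z: "\<And>k. k \<notin> Delta N1 N2 N3 \<Longrightarrow> q k = 0" and n: "\<And>k. q (negf k) = cnj (q k)"
    using q unfolding Vchar by auto
  have "(\<Sum>k\<in>Delta N1 N2 N3. complex_of_real (Re (q k)) * uvec k j + complex_of_real (Im (q k)) * vvec k j)
     = (\<Sum>k\<in>Delta N1 N2 N3. (if k = j then q k / 2 else 0) + (if k = negf j then cnj (q k) / 2 else 0))"
  proof (intro sum.cong refl)
    fix k
    have e1: "complex_of_real (Re z) + \<i> * complex_of_real (Im z) = z" for z by (simp add: complex_eq_iff)
    have e2: "complex_of_real (Re z) - \<i> * complex_of_real (Im z) = cnj z" for z by (simp add: complex_eq_iff)
    show "complex_of_real (Re (q k)) * uvec k j + complex_of_real (Im (q k)) * vvec k j =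
      (if k = j then q k / 2 else 0) + (if k = negf j then cnj (q k) / 2 else 0)"
      unfolding uvec_def vvec_def negf_swap
      using e1[of "q k"] e2[of "q k"]
      by (cases "k = j"; cases "k = negf j") (auto simp: field_simps)
  qed
  also have "\<dots> = (if j \<in> Delta N1 N2 N3 then q j / 2 + cnj (q (negf j)) / 2 else 0)"
    by (simp add: sum.distrib sum.delta')
  also have "\<dots> = q j"
    using z[of j] n[of j] by auto
  finally show "q j = (\<Sum>k\<in>Delta N1 N2 N3. complex_of_real (Re (q k)) * uvec k j + complex_of_real (Im (q k)) * vvec k j)"
    by simp
qed

lemma lin_sum:
  assumes lin: "\<forall>p\<in>Vsp N1 N2 N3. \<forall>q\<in>Vsp N1 N2 N3. \<forall>a b :: real.
        L (\<lambda>k. complex_of_real a * p k + complex_of_real b * q k) = a * L p + b * L q"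
    and fin: "finite K" and gh: "\<forall>k\<in>K. g k \<in> Vsp N1 N2 N3 \<and> h k \<in> Vsp N1 N2 N3"
  shows "(\<lambda>j. \<Sum>k\<in>K. complex_of_real (a k) * g k j + complex_of_real (b k) * h k j) \<in> Vsp N1 N2 N3 \<and>
     L (\<lambda>j. \<Sum>k\<in>K. complex_of_real (a k) * g k j + complex_of_real (b k) * h k j) = (\<Sum>k\<in>K. a k * L (g k) + b k * L (h k))"
  using fin gh
proof (induction K rule: finite_induct)
  case empty
  have "L (\<lambda>k. complex_of_real 0 * 0 + complex_of_real 0 * 0) = 0 * L (\<lambda>_. 0) + 0 * L (\<lambda>_. 0)"
    using lin[rule_format, OF Vsp_zero Vsp_zero, of 0 0] by simp
  then show ?case using Vsp_zero by simp
next
  case (insert x F)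
  define A where "A = (\<lambda>j. complex_of_real (a x) * g x j + complex_of_real (b x) * h x j)"
  define B where "B = (\<lambda>j. \<Sum>k\<in>F. complex_of_real (a k) * g k j + complex_of_real (b k) * h k j)"
  have gx: "g x \<in> Vsp N1 N2 N3" "h x \<in> Vsp N1 N2 N3" using insert by auto
  have AV: "A \<in> Vsp N1 N2 N3" unfolding A_def by (rule Vsp_lin[OF gx])
  have LA: "L A = a x * L (g x) + b x * L (h x)" unfolding A_def using lin gx by blast
  have BV: "B \<in> Vsp N1 N2 N3" and LB: "L B = (\<Sum>k\<in>F. a k * L (g k) + b k * L (h k))"
    using insert unfolding B_def by auto
  have eq: "(\<lambda>j. \<Sum>k\<in>insert x F. complex_of_real (a k) * g k j + complex_of_real (b k) * h k j)
     = (\<lambda>j. complex_of_real 1 * A j + complex_of_real 1 * B j)"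
    unfolding A_def B_def using insert by simp
  show ?case unfolding eq
  proof
    show "(\<lambda>j. complex_of_real 1 * A j + complex_of_real 1 * B j) \<in> Vsp N1 N2 N3" by (rule Vsp_lin[OF AV BV])
    have "L (\<lambda>j. complex_of_real 1 * A j + complex_of_real 1 * B j) = 1 * L A + 1 * L B" using lin AV BV by blast
    then show "L (\<lambda>j. complex_of_real 1 * A j + complex_of_real 1 * B j) = (\<Sum>k\<in>insert x F. a k * L (g k) + b k * L (h k))"
      using LA LB insert by simp
  qed
qed

definition repPhi :: "nat \<Rightarrow> nat \<Rightarrow> nat \<Rightarrow> ((freq \<Rightarrow> complex) \<Rightarrow> real) \<Rightarrow> freq \<Rightarrow> complex" where
  "repPhi N1 N2 N3 L k = (if k \<in> Delta N1 N2 N3 then complex_of_real (L (uvec k)) - \<i> * complex_of_real (L (vvec k)) else 0)"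

lemma repPhi_herm:
  assumes lin: "\<forall>p\<in>Vsp N1 N2 N3. \<forall>q\<in>Vsp N1 N2 N3. \<forall>a b :: real.
        L (\<lambda>k. complex_of_real a * p k + complex_of_real b * q k) = a * L p + b * L q"
  shows "repPhi N1 N2 N3 L (negf k) = cnj (repPhi N1 N2 N3 L k)"
proof (cases "k \<in> Delta N1 N2 N3")
  case True
  have "L (vvec (negf k)) = -1 * L (vvec k) + 0 * L (vvec k)"
    unfolding vvec_neg by (rule lin[rule_format, OF vvec_V[OF True] vvec_V[OF True]])
  then have "L (vvec (negf k)) = - L (vvec k)" by simp
  then show ?thesis unfolding repPhi_def using True by (simp add: uvec_neg)
next
  case False then show ?thesis unfolding repPhi_def by simp
qed

lemma repPhi_rep:
  assumes lin: "\<forall>p\<in>Vsp N1 N2 N3. \<forall>q\<in>Vsp N1 N2 N3. \<forall>a b :: real.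
        L (\<lambda>k. complex_of_real a * p k + complex_of_real b * q k) = a * L p + b * L q"
    and q: "q \<in> Vsp N1 N2 N3"
  shows "L q = Re (LPhi N1 N2 N3 (repPhi N1 N2 N3 L) q)"
proof -
  have "L q = L (\<lambda>j. \<Sum>k\<in>Delta N1 N2 N3. complex_of_real (Re (q k)) * uvec k j + complex_of_real (Im (q k)) * vvec k j)"
    using decomp[OF q] by simp
  also have "\<dots> = (\<Sum>k\<in>Delta N1 N2 N3. Re (q k) * L (uvec k) + Im (q k) * L (vvec k))"
    using lin_sum[OF lin finite_Delta, where g=uvec and h=vvec and a="\<lambda>k. Re (q k)" and b="\<lambda>k. Im (q k)"] uvec_V vvec_V by blast
  also have "\<dots> = Re (LPhi N1 N2 N3 (repPhi N1 N2 N3 L) q)"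
    unfolding LPhi_def Re_sum repPhi_def by (intro sum.cong refl) simp
  finally show ?thesis .
qed

lemma LPhi_real:
  assumes h: "\<And>k. k \<in> Delta N1 N2 N3 \<Longrightarrow> \<Phi> (negf k) = cnj (\<Phi> k)" and q: "q \<in> Vsp N1 N2 N3"
  shows "LPhi N1 N2 N3 \<Phi> q \<in> \<real>"
proof -
  have n: "\<And>k. q (negf k) = cnj (q k)" using q unfolding Vchar by auto
  have "cnj (LPhi N1 N2 N3 \<Phi> q) = (\<Sum>k\<in>Delta N1 N2 N3. q (negf k) * \<Phi> (negf k))"
    unfolding LPhi_def cnj_sum using h n by (intro sum.cong refl) simp
  also have "\<dots> = LPhi N1 N2 N3 \<Phi> q" unfolding LPhi_def by (rule sum_negf)
  finally show ?thesis unfolding Reals_cnj_iff .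
qed

lemma real_zero_iff: "z \<in> \<real> \<Longrightarrow> (Re z = 0) = (z = 0)"
  by (auto simp: complex_is_Real_iff complex_eq_iff)

lemma real_nonneg: "z \<in> \<real> \<Longrightarrow> 0 \<le> Re z \<Longrightarrow> 0 \<le> z"
  by (auto simp: complex_is_Real_iff less_eq_complex_def)



lemma Q_zero: "(\<lambda>_. 0) \<in> Qset N1 N2 N3"
  using Q_intro[where r=0 and F="\<lambda>_ _. 0"] by simp

lemma Q_single: "\<forall>k. k \<notin> Sset N1 N2 N3 \<longrightarrow> F k = 0 \<Longrightarrow> conv N1 N2 N3 F F \<in> Qset N1 N2 N3"
  using Q_intro[where r=1 and F="\<lambda>_. F"] by simp

lemma conv_scale: "conv N1 N2 N3 (\<lambda>k. complex_of_real (sqrt 2) * F k) (\<lambda>k. complex_of_real (sqrt 2) * F k) x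
   = 2 * conv N1 N2 N3 F F x"
proof -
  have e: "complex_of_real (sqrt 2) * cnj (complex_of_real (sqrt 2)) = 2"
    by (simp flip: of_real_mult)
  have e2: "complex_of_real (sqrt 2) * complex_of_real (sqrt 2) = 2"
    by (simp flip: of_real_mult)
  have t: "complex_of_real (sqrt 2) * a * cnj (complex_of_real (sqrt 2) * b) = 2 * (a * cnj b)" for a b
  proof -
    have "complex_of_real (sqrt 2) * a * cnj (complex_of_real (sqrt 2) * b)
        = (complex_of_real (sqrt 2) * cnj (complex_of_real (sqrt 2))) * (a * cnj b)"
      by (simp only: complex_cnj_mult mult_ac)
    then show ?thesis by (simp only: e)
  qed
  show ?thesis unfolding conv_def sum_distrib_left
    by (intro sum.cong refl) (simp add: t e2)
qed

lemma Q_scale: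
  assumes f: "f \<in> Qset N1 N2 N3"
  shows "(\<lambda>k. complex_of_real 2 * f k + complex_of_real 0 * f k) \<in> Qset N1 N2 N3"
proof -
  obtain r F where supp: "\<forall>j<(r::nat). \<forall>k. k \<notin> Sset N1 N2 N3 \<longrightarrow> F j k = 0"
    and fe: "f = (\<lambda>k. \<Sum>j<r. conv N1 N2 N3 (F j) (F j) k)"
    by (rule Q_elim[OF f])
  define G where "G j = (\<lambda>k. complex_of_real (sqrt 2) * F j k)" for j
  have suppG: "\<forall>j<r. \<forall>k. k \<notin> Sset N1 N2 N3 \<longrightarrow> G j k = 0" using supp unfolding G_def by simp
  have "(\<lambda>k. complex_of_real 2 * f k + complex_of_real 0 * f k) = (\<lambda>k. \<Sum>j<r. conv N1 N2 N3 (G j) (G j) k)"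
    unfolding fe G_def conv_scale by (simp add: sum_distrib_left)
  then show ?thesis using Q_intro[OF suppG] by simp
qed

definition restr :: "nat \<Rightarrow> nat \<Rightarrow> nat \<Rightarrow> (freq \<Rightarrow> complex) \<Rightarrow> freq \<Rightarrow> complex" where
  "restr N1 N2 N3 F = (\<lambda>k. if k \<in> Sset N1 N2 N3 then F k else 0)"

lemma restr_supp: "\<forall>k. k \<notin> Sset N1 N2 N3 \<longrightarrow> restr N1 N2 N3 F k = 0"
  unfolding restr_def by simp

lemma conv_restr: "conv N1 N2 N3 (restr N1 N2 N3 F) (restr N1 N2 N3 F) = conv N1 N2 N3 F F"
  unfolding conv_def restr_def by (intro ext sum.cong refl) auto

lemma quadS_restr: "quadS N1 N2 N3 \<Phi> (restr N1 N2 N3 F) = quadS N1 N2 N3 \<Phi> F"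
  unfolding quadS_def restr_def by (intro sum.cong refl) auto

lemma LPhi_Q_nonneg:
  assumes h: "herm_pos N1 N2 N3 \<Phi>" and f: "f \<in> Qset N1 N2 N3"
  shows "0 \<le> LPhi N1 N2 N3 \<Phi> f"
proof -
  obtain r F where "\<forall>j<(r::nat). \<forall>k. k \<notin> Sset N1 N2 N3 \<longrightarrow> F j k = 0"
    and fe: "f = (\<lambda>k. \<Sum>j<r. conv N1 N2 N3 (F j) (F j) k)"
    by (rule Q_elim[OF f])
  have "LPhi N1 N2 N3 \<Phi> f = (\<Sum>j<r. quadS N1 N2 N3 \<Phi> (F j))"
    unfolding fe LPhi_sum LPhi_conv ..
  also have "0 \<le> \<dots>" by (intro sum_nonneg herm_pos_quadS[OF h])
  finally show ?thesis .
qed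

lemma sum_nonneg_Re_zero:
  fixes z :: "'a \<Rightarrow> complex"
  assumes fin: "finite A" and nn: "\<forall>j\<in>A. 0 \<le> z j" and re: "Re (sum z A) = 0" and j: "j \<in> A"
  shows "z j = 0"
proof -
  have s0: "(\<Sum>i\<in>A. Re (z i)) = 0" using re by (simp only: Re_sum)
  have nn': "\<forall>i\<in>A. 0 \<le> Re (z i)"
  proof
    fix i assume "i \<in> A"
    then have "0 \<le> z i" using nn by blast
    then show "0 \<le> Re (z i)" unfolding less_eq_complex_def by simp
  qed
  have "\<forall>i\<in>A. Re (z i) = 0" using sum_nonneg_eq_0_iff[OF fin, of "\<lambda>i. Re (z i)"] nn' s0 by blast
  then have r: "Re (z j) = 0" using j by blast
  have "0 \<le> z j" using nn j by blast
  then have "Im (z j) = 0" unfolding less_eq_complex_def by simp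
  with r show ?thesis by (simp add: complex_eq_iff)
qed



lemma dir1:
  fixes N1 N2 N3 :: nat
  assumes lin: "real_lin_functional (Vsp N1 N2 N3) L" and sup: "supports (Qset N1 N2 N3) L c"
    and f0Q: "f0 \<in> Qset N1 N2 N3" and f0nz: "f0 \<noteq> (\<lambda>_. 0)" and f0c: "L f0 = c"
  shows "\<exists>\<Phi>. herm_pos N1 N2 N3 \<Phi> \<and> (\<exists>k\<in>Delta N1 N2 N3. \<Phi> k \<noteq> 0)
              \<and> det (Amat N1 N2 N3 \<Phi>) = 0
              \<and> {f \<in> Vsp N1 N2 N3. L f = c} = {f \<in> Vsp N1 N2 N3. LPhi N1 N2 N3 \<Phi> f = 0}"
proof -
  have linL: "\<forall>p\<in>Vsp N1 N2 N3. \<forall>q\<in>Vsp N1 N2 N3. \<forall>a b :: real.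
        L (\<lambda>k. complex_of_real a * p k + complex_of_real b * q k) = a * L p + b * L q"
    and nz: "\<exists>q\<in>Vsp N1 N2 N3. L q \<noteq> 0" using lin unfolding real_lin_functional_def by auto
  have f0V: "f0 \<in> Vsp N1 N2 N3" using f0Q unfolding Qset_def by blast
  have L0: "L (\<lambda>_. 0) = 0"
    using linL[rule_format, OF Vsp_zero Vsp_zero, of 0 0] by simp
  have L2: "L (\<lambda>k. complex_of_real 2 * f0 k + complex_of_real 0 * f0 k) = 2 * L f0 + 0 * L f0"
    by (rule linL[rule_format, OF f0V f0V])
  have Q2: "(\<lambda>k. complex_of_real 2 * f0 k + complex_of_real 0 * f0 k) \<in> Qset N1 N2 N3"
    by (rule Q_scale[OF f0Q])
  have sup1: "(\<forall>f\<in>Qset N1 N2 N3. c \<le> L f) \<or> (\<forall>f\<in>Qset N1 N2 N3. L f \<le> c)"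
    using sup unfolding supports_def by blast
  have L2': "L (\<lambda>k. complex_of_real 2 * f0 k + complex_of_real 0 * f0 k) = 2 * c" using L2 f0c by simp
  have c0: "c = 0"
  proof (cases "\<forall>f\<in>Qset N1 N2 N3. c \<le> L f")
    case True
    have a: "c \<le> L (\<lambda>_. 0)" using True Q_zero by blast
    have b: "c \<le> L (\<lambda>k. complex_of_real 2 * f0 k + complex_of_real 0 * f0 k)" using True Q2 by blast
    show ?thesis using a b L0 L2' by linarith
  next
    case False
    then have F: "\<forall>f\<in>Qset N1 N2 N3. L f \<le> c" using sup1 by blast
    have a: "L (\<lambda>_. 0) \<le> c" using F Q_zero by blast
    have b: "L (\<lambda>k. complex_of_real 2 * f0 k + complex_of_real 0 * f0 k) \<le> c" using F Q2 by blast
    show ?thesis using a b L0 L2' by linarith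
  qed
  obtain \<sigma> :: real where \<sigma>: "\<sigma> = 1 \<or> \<sigma> = -1" and \<sigma>Q: "\<forall>f\<in>Qset N1 N2 N3. 0 \<le> \<sigma> * L f"
  proof (cases "\<forall>f\<in>Qset N1 N2 N3. c \<le> L f")
    case True then show ?thesis using that[of 1] c0 by simp
  next
    case False then have "\<forall>f\<in>Qset N1 N2 N3. L f \<le> c" using sup1 by blast
    then show ?thesis using that[of "-1"] c0 by simp
  qed
  define L' where "L' f = \<sigma> * L f" for f
  have linL': "\<forall>p\<in>Vsp N1 N2 N3. \<forall>q\<in>Vsp N1 N2 N3. \<forall>a b :: real.
        L' (\<lambda>k. complex_of_real a * p k + complex_of_real b * q k) = a * L' p + b * L' q"
    unfolding L'_def using linL by (simp add: algebra_simps)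
  define \<Phi> where "\<Phi> = repPhi N1 N2 N3 L'"
  have rep: "\<And>q. q \<in> Vsp N1 N2 N3 \<Longrightarrow> L' q = Re (LPhi N1 N2 N3 \<Phi> q)"
    unfolding \<Phi>_def using repPhi_rep[OF linL'] by blast
  have herm: "\<And>k. \<Phi> (negf k) = cnj (\<Phi> k)"
    unfolding \<Phi>_def using repPhi_herm[OF linL'] by blast
  have real: "\<And>q. q \<in> Vsp N1 N2 N3 \<Longrightarrow> LPhi N1 N2 N3 \<Phi> q \<in> \<real>"
    using LPhi_real herm by blast
  have hp: "herm_pos N1 N2 N3 \<Phi>"
  proof (rule quad_to_herm)
    fix F
    let ?G = "restr N1 N2 N3 F"
    have GQ: "conv N1 N2 N3 ?G ?G \<in> Qset N1 N2 N3" by (rule Q_single[OF restr_supp])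
    have GV: "conv N1 N2 N3 ?G ?G \<in> Vsp N1 N2 N3" using GQ unfolding Qset_def by blast
    have "0 \<le> L' (conv N1 N2 N3 ?G ?G)" using \<sigma>Q GQ unfolding L'_def by blast
    then have "0 \<le> Re (LPhi N1 N2 N3 \<Phi> (conv N1 N2 N3 ?G ?G))" using rep[OF GV] by simp
    then have "0 \<le> LPhi N1 N2 N3 \<Phi> (conv N1 N2 N3 ?G ?G)" using real_nonneg real[OF GV] by blast
    then show "0 \<le> quadS N1 N2 N3 \<Phi> F" unfolding LPhi_conv quadS_restr .
  qed
  have Phinz: "\<exists>k\<in>Delta N1 N2 N3. \<Phi> k \<noteq> 0"
  proof (rule ccontr)
    assume "\<not> ?thesis"
    then have "\<forall>k\<in>Delta N1 N2 N3. \<Phi> k = 0" by blast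
    then have "\<And>q. LPhi N1 N2 N3 \<Phi> q = 0" unfolding LPhi_def by simp
    then have "\<And>q. q \<in> Vsp N1 N2 N3 \<Longrightarrow> L' q = 0" using rep by simp
    moreover obtain q where "q \<in> Vsp N1 N2 N3" "L q \<noteq> 0" using nz by blast
    ultimately have "\<sigma> * L q = 0" unfolding L'_def by blast
    then show False using \<sigma> \<open>L q \<noteq> 0\<close> by auto
  qed
  have det0: "det (Amat N1 N2 N3 \<Phi>) = 0"
  proof -
    obtain r F where supp: "\<forall>j<(r::nat). \<forall>k. k \<notin> Sset N1 N2 N3 \<longrightarrow> F j k = 0"
      and fe: "f0 = (\<lambda>k. \<Sum>j<r. conv N1 N2 N3 (F j) (F j) k)"
      by (rule Q_elim[OF f0Q])
    have Lf0: "LPhi N1 N2 N3 \<Phi> f0 = (\<Sum>j<r. quadS N1 N2 N3 \<Phi> (F j))"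
      unfolding fe LPhi_sum LPhi_conv ..
    have "Re (LPhi N1 N2 N3 \<Phi> f0) = 0" using rep[OF f0V] f0c c0 unfolding L'_def by simp
    then have re0: "Re (\<Sum>j<r. quadS N1 N2 N3 \<Phi> (F j)) = 0" unfolding Lf0 .
    have nn: "\<forall>j\<in>{..<r}. 0 \<le> quadS N1 N2 N3 \<Phi> (F j)" using herm_pos_quadS[OF hp] by blast
    have qz: "\<And>j. j < r \<Longrightarrow> quadS N1 N2 N3 \<Phi> (F j) = 0"
      using sum_nonneg_Re_zero[of "{..<r}" "\<lambda>j. quadS N1 N2 N3 \<Phi> (F j)", OF finite_lessThan nn re0] by blast
    have "\<exists>j<r. \<exists>s\<in>Sset N1 N2 N3. F j s \<noteq> 0"
    proof (rule ccontr)
      assume "\<not> ?thesis"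
      then have z: "\<forall>j<r. \<forall>s\<in>Sset N1 N2 N3. F j s = 0" by blast
      have "\<And>j k. j < r \<Longrightarrow> conv N1 N2 N3 (F j) (F j) k = 0"
        unfolding conv_def using z by (intro sum.neutral ballI) simp
      then have "f0 = (\<lambda>_. 0)" unfolding fe by simp
      with f0nz show False by blast
    qed
    then obtain j s where j: "j < r" and s: "s \<in> Sset N1 N2 N3" and Fjs: "F j s \<noteq> 0" by blast
    define w where "w i = F j (sidx N2 N3 i)" for i
    have psd: "0 \<le> (\<Sum>i<nS N1 N2 N3. \<Sum>i'<nS N1 N2 N3. \<xi> i * cnj (\<xi> i') * \<Phi> (fdiff (sidx N2 N3 i) (sidx N2 N3 i')))" for \<xi>
      using hp[unfolded herm_pos_def, rule_format, of "nS N1 N2 N3" "sidx N2 N3" \<xi>] sidx_S by blast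
    have wq: "(\<Sum>i<nS N1 N2 N3. \<Sum>i'<nS N1 N2 N3. w i * cnj (w i') * \<Phi> (fdiff (sidx N2 N3 i) (sidx N2 N3 i'))) = 0"
      using qz[OF j] unfolding quadS_sidx w_def .
    have ker: "(\<Sum>i<nS N1 N2 N3. w i * \<Phi> (fdiff (sidx N2 N3 i) (sidx N2 N3 i0))) = 0" if "i0 < nS N1 N2 N3" for i0
      using psd_kernel[where c="\<lambda>i i'. \<Phi> (fdiff (sidx N2 N3 i) (sidx N2 N3 i'))", OF psd wq that] .
    obtain i1 where i1: "i1 < nS N1 N2 N3" "sidx N2 N3 i1 = s" using sidx_surj[OF s] by blast
    have "w i1 \<noteq> 0" unfolding w_def using i1 Fjs by simp
    then show ?thesis unfolding det_Amat_zero_iff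
      using i1 ker by (intro exI[of _ w]) (auto simp: mult.commute)
  qed
  have Hq: "{f \<in> Vsp N1 N2 N3. L f = c} = {f \<in> Vsp N1 N2 N3. LPhi N1 N2 N3 \<Phi> f = 0}"
  proof (intro Collect_cong conj_cong refl)
    fix f assume fV: "f \<in> Vsp N1 N2 N3"
    have "L f = c \<longleftrightarrow> L' f = 0" unfolding L'_def c0 using \<sigma> by auto
    also have "\<dots> \<longleftrightarrow> Re (LPhi N1 N2 N3 \<Phi> f) = 0" using rep[OF fV] by simp
    also have "\<dots> \<longleftrightarrow> LPhi N1 N2 N3 \<Phi> f = 0" using real_zero_iff[OF real[OF fV]] .
    finally show "L f = c \<longleftrightarrow> LPhi N1 N2 N3 \<Phi> f = 0" .
  qed
  show ?thesis using hp Phinz det0 Hq by blast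
qed



lemma dir2:
  fixes N1 N2 N3 :: nat
  assumes hp: "herm_pos N1 N2 N3 \<Phi>" and nzP: "\<exists>k\<in>Delta N1 N2 N3. \<Phi> k \<noteq> 0"
    and det0: "det (Amat N1 N2 N3 \<Phi>) = 0"
  shows "\<exists>L c. real_lin_functional (Vsp N1 N2 N3) L \<and> supports (Qset N1 N2 N3) L c
              \<and> (\<exists>f0\<in>Qset N1 N2 N3. f0 \<noteq> (\<lambda>_. 0) \<and> L f0 = c)
              \<and> {f \<in> Vsp N1 N2 N3. LPhi N1 N2 N3 \<Phi> f = 0} = {f \<in> Vsp N1 N2 N3. L f = c}"
proof -
  have herm: "\<And>k. k \<in> Delta N1 N2 N3 \<Longrightarrow> \<Phi> (negf k) = cnj (\<Phi> k)" using herm_pos_herm[OF hp] .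
  define L where "L f = Re (LPhi N1 N2 N3 \<Phi> f)" for f
  have linLP: "LPhi N1 N2 N3 \<Phi> (\<lambda>k. complex_of_real a * p k + complex_of_real b * q k)
      = complex_of_real a * LPhi N1 N2 N3 \<Phi> p + complex_of_real b * LPhi N1 N2 N3 \<Phi> q" for a b p q
    unfolding LPhi_def by (simp add: sum.distrib sum_distrib_left algebra_simps)
  define q0 where "q0 k = (if k \<in> Delta N1 N2 N3 then cnj (\<Phi> k) else 0)" for k
  have q0V: "q0 \<in> Vsp N1 N2 N3" unfolding Vchar q0_def using herm by auto
  have "L q0 = (\<Sum>k\<in>Delta N1 N2 N3. (cmod (\<Phi> k))\<^sup>2)"
  proof -
    have "L q0 = (\<Sum>k\<in>Delta N1 N2 N3. Re (cnj (\<Phi> k) * \<Phi> k))"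
      unfolding L_def LPhi_def q0_def Re_sum by simp
    also have "\<dots> = (\<Sum>k\<in>Delta N1 N2 N3. (cmod (\<Phi> k))\<^sup>2)"
      by (intro sum.cong refl) (simp add: cmod_power2, simp add: power2_eq_square)
    finally show ?thesis .
  qed
  moreover have "(\<Sum>k\<in>Delta N1 N2 N3. (cmod (\<Phi> k))\<^sup>2) \<noteq> 0"
  proof
    assume "(\<Sum>k\<in>Delta N1 N2 N3. (cmod (\<Phi> k))\<^sup>2) = 0"
    then have "\<forall>k\<in>Delta N1 N2 N3. (cmod (\<Phi> k))\<^sup>2 = 0"
      using sum_nonneg_eq_0_iff[OF finite_Delta, where f="\<lambda>k. (cmod (\<Phi> k))\<^sup>2"] by simp
    with nzP show False by simp
  qed
  ultimately have Lq0: "L q0 \<noteq> 0" by simp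
  have lin: "real_lin_functional (Vsp N1 N2 N3) L"
    unfolding real_lin_functional_def L_def linLP using q0V Lq0 unfolding L_def by auto
  have supQ: "\<forall>f\<in>Qset N1 N2 N3. 0 \<le> L f"
    unfolding L_def using LPhi_Q_nonneg[OF hp] by (auto simp: less_eq_complex_def)
  obtain w where w1: "\<exists>i<nS N1 N2 N3. w i \<noteq> 0"
    and w2: "\<forall>i<nS N1 N2 N3. (\<Sum>j<nS N1 N2 N3. \<Phi> (fdiff (sidx N2 N3 j) (sidx N2 N3 i)) * w j) = 0"
    using det0 unfolding det_Amat_zero_iff by blast
  obtain i1 where i1: "i1 < nS N1 N2 N3" "w i1 \<noteq> 0" using w1 by blast
  have inj: "inj_on (sidx N2 N3) {..<nS N1 N2 N3}" using sidx_bij bij_betw_imp_inj_on by blast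
  define F where "F s = (if s \<in> Sset N1 N2 N3 then w (the_inv_into {..<nS N1 N2 N3} (sidx N2 N3) s) else 0)" for s
  have Fs: "F (sidx N2 N3 i) = w i" if "i < nS N1 N2 N3" for i
    unfolding F_def using sidx_S[OF that] the_inv_into_f_f[OF inj] that by simp
  have suppF: "\<forall>k. k \<notin> Sset N1 N2 N3 \<longrightarrow> F k = 0" unfolding F_def by simp
  define f0 where "f0 = conv N1 N2 N3 F F"
  have f0Q: "f0 \<in> Qset N1 N2 N3" unfolding f0_def by (rule Q_single[OF suppF])
  have LPf0: "LPhi N1 N2 N3 \<Phi> f0 = 0"
  proof -
    have "LPhi N1 N2 N3 \<Phi> f0 = (\<Sum>i<nS N1 N2 N3. \<Sum>i'<nS N1 N2 N3. w i * cnj (w i') * \<Phi> (fdiff (sidx N2 N3 i) (sidx N2 N3 i')))"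
      unfolding f0_def LPhi_conv quadS_sidx using Fs by (intro sum.cong refl) simp
    also have "\<dots> = (\<Sum>i'<nS N1 N2 N3. cnj (w i') * (\<Sum>i<nS N1 N2 N3. \<Phi> (fdiff (sidx N2 N3 i) (sidx N2 N3 i')) * w i))"
      unfolding sum_distrib_left by (subst sum.swap) (intro sum.cong refl, simp only: mult_ac)
    also have "\<dots> = 0" using w2 by simp
    finally show ?thesis .
  qed
  have f0nz: "f0 \<noteq> (\<lambda>_. 0)"
  proof
    assume f00: "f0 = (\<lambda>_. 0)"
    have "f0 (0,0,0) = (\<Sum>x\<in>Sset N1 N2 N3. F x * cnj (F x))"
    proof -
      have "f0 (0,0,0) = (\<Sum>x\<in>Sset N1 N2 N3. \<Sum>y\<in>Sset N1 N2 N3. if y = x then F x * cnj (F y) else 0)"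
        unfolding f0_def conv_def fdiff_zero_iff by (intro sum.cong refl) auto
      also have "\<dots> = (\<Sum>x\<in>Sset N1 N2 N3. F x * cnj (F x))" by (simp add: sum.delta)
      finally show ?thesis .
    qed
    then have "(\<Sum>x\<in>Sset N1 N2 N3. (cmod (F x))\<^sup>2) = 0"
      using f00 by (simp add: complex_norm_square[symmetric] del: of_real_power flip: of_real_sum)
    then have "\<forall>x\<in>Sset N1 N2 N3. (cmod (F x))\<^sup>2 = 0"
      using sum_nonneg_eq_0_iff[OF finite_Sset, where f="\<lambda>x. (cmod (F x))\<^sup>2"] by simp
    then have "F (sidx N2 N3 i1) = 0" using sidx_S[OF i1(1)] by simp
    with Fs[OF i1(1)] i1(2) show False by simp
  qed
  have Hq: "{f \<in> Vsp N1 N2 N3. LPhi N1 N2 N3 \<Phi> f = 0} = {f \<in> Vsp N1 N2 N3. L f = 0}"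
  proof (intro Collect_cong conj_cong refl)
    fix f assume fV: "f \<in> Vsp N1 N2 N3"
    show "LPhi N1 N2 N3 \<Phi> f = 0 \<longleftrightarrow> L f = 0"
      unfolding L_def using real_zero_iff[OF LPhi_real[where \<Phi>=\<Phi>, OF herm fV]] by simp
  qed
  have Lf0: "L f0 = 0" unfolding L_def LPf0 by simp
  have sup: "supports (Qset N1 N2 N3) L 0"
  proof -
    have "L f0 = 0" unfolding L_def LPf0 by simp
    then show ?thesis unfolding supports_def using supQ f0Q by auto
  qed
  show ?thesis using lin sup f0Q f0nz Lf0 Hq by blast
qed


theorem corollary1:
  fixes N1 N2 N3 :: nat
  shows "{H. \<exists>L c. real_lin_functional (Vsp N1 N2 N3) L \<and> supports (Qset N1 N2 N3) L c
              \<and> (\<exists>f0\<in>Qset N1 N2 N3. f0 \<noteq> (\<lambda>_. 0) \<and> L f0 = c)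
              \<and> H = {f \<in> Vsp N1 N2 N3. L f = c}}
       = {H. \<exists>\<Phi>. herm_pos N1 N2 N3 \<Phi> \<and> (\<exists>k\<in>Delta N1 N2 N3. \<Phi> k \<noteq> 0)
              \<and> det (Amat N1 N2 N3 \<Phi>) = 0
              \<and> H = {f \<in> Vsp N1 N2 N3. LPhi N1 N2 N3 \<Phi> f = 0}}"
proof (intro equalityI subsetI)
  fix H
  assume "H \<in> {H. \<exists>L c. real_lin_functional (Vsp N1 N2 N3) L \<and> supports (Qset N1 N2 N3) L c
              \<and> (\<exists>f0\<in>Qset N1 N2 N3. f0 \<noteq> (\<lambda>_. 0) \<and> L f0 = c)
              \<and> H = {f \<in> Vsp N1 N2 N3. L f = c}}"
  then obtain L c f0 where a: "real_lin_functional (Vsp N1 N2 N3) L" "supports (Qset N1 N2 N3) L c"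
    "f0 \<in> Qset N1 N2 N3" "f0 \<noteq> (\<lambda>_. 0)" "L f0 = c" and H: "H = {f \<in> Vsp N1 N2 N3. L f = c}"
    by blast
  from dir1[OF a] H show "H \<in> {H. \<exists>\<Phi>. herm_pos N1 N2 N3 \<Phi> \<and> (\<exists>k\<in>Delta N1 N2 N3. \<Phi> k \<noteq> 0)
              \<and> det (Amat N1 N2 N3 \<Phi>) = 0
              \<and> H = {f \<in> Vsp N1 N2 N3. LPhi N1 N2 N3 \<Phi> f = 0}}" by simp
next
  fix H
  assume "H \<in> {H. \<exists>\<Phi>. herm_pos N1 N2 N3 \<Phi> \<and> (\<exists>k\<in>Delta N1 N2 N3. \<Phi> k \<noteq> 0)
              \<and> det (Amat N1 N2 N3 \<Phi>) = 0
              \<and> H = {f \<in> Vsp N1 N2 N3. LPhi N1 N2 N3 \<Phi> f = 0}}"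
  then obtain \<Phi> where a: "herm_pos N1 N2 N3 \<Phi>" "\<exists>k\<in>Delta N1 N2 N3. \<Phi> k \<noteq> 0"
    "det (Amat N1 N2 N3 \<Phi>) = 0" and H: "H = {f \<in> Vsp N1 N2 N3. LPhi N1 N2 N3 \<Phi> f = 0}"
    by blast
  from dir2[OF a] H show "H \<in> {H. \<exists>L c. real_lin_functional (Vsp N1 N2 N3) L \<and> supports (Qset N1 N2 N3) L c
              \<and> (\<exists>f0\<in>Qset N1 N2 N3. f0 \<noteq> (\<lambda>_. 0) \<and> L f0 = c)
              \<and> H = {f \<in> Vsp N1 N2 N3. L f = c}}" by simp
qed

end
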